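(* For all closed terms $t_0,t_1$ of $\lambda_S$, if $t_0\equiv t_1$ then $t_0\approx_{\emptyset}t_1$.
   Context: Terms of $\lambda_S$: $t ::= x \mid \lambda x.t \mid t\,t \mid \mathcal{S}k.t \mid \langle t\rangle$ (shift $\mathcal{S}k.t$ binds $k$, reset $\langle t\rangle$), up to $\alpha$-conversion; closed means no free variables. Values: $v ::= \lambda x.t$. Pure contexts $E ::= \Box \mid v\,E \mid E\,t$; evaluation contexts $F ::= \Box \mid v\,F \mid F\,t \mid \langle F\rangle$; contexts $C ::= \Box \mid \lambda x.C \mid t\,C \mid C\,t \mid \mathcal{S}k.C \mid \langle C\rangle$. Reduction: $F[(\lambda x.t)\,v] \to F[t\{v/x\}]$; $F[\langle E[\mathcal{S}k.t]\rangle] \to F[\langle t\{\lambda x.\langle E[x]\rangle/k\}\rangle]$ ($x\notin\mathrm{fv}(E)$); $F[\langle v\rangle]\to F[v]$. $\to^*$ reflexive-transitive closure; $t\Downarrow t'$ means $t\to^*t'$ with $t'$ irreducible. Stuck: not a value and irreducible; normal form: value or stuck term. Closures: for $R$ a relation on closed terms, $\widetilde R$ is the smallest relation containing $R$, all $(x,x)$, and closed under all term constructors, restricted to closed terms; $\widehat R$ is the smallest relation on closed evaluation contexts with $\Box\widehat R\Box$, $v_0F_0\widehat Rv_1F_1$ if $F_0\widehat RF_1,v_0\widetilde Rv_1$; $F_0t_0\widehat RF_1t_1$ if $F_0\widehat RF_1,t_0\widetilde Rt_1$; $\langle F_0\rangle\widehat R\langle F_1\rangle$ if $F_0\widehat RF_1$.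 Environmental bisimilarity: an environment $\mathcal E$ is a relation on closed normal forms relating values only with values and stuck terms only with stuck terms. An environmental relation $\mathcal X$ is a set of environments and triples $(\mathcal E,t_0,t_1)$ with $t_0,t_1$ closed, written $t_0\,\mathcal X_{\mathcal E}\,t_1$. $\mathcal X$ is an environmental bisimulation if (1) whenever $t_0\mathcal X_{\mathcal E}t_1$: (a) $t_0\to t_0'$ implies $t_1\to^*t_1'$ with $t_0'\mathcal X_{\mathcal E}t_1'$; (b) if $t_0$ is a value $v_0$ then $t_1\to^*v_1$, a value, and $\mathcal E\cup\{(v_0,v_1)\}\in\mathcal X$; (c) if $t_0$ is stuck then $t_1\to^*t_1'$ stuck and $\mathcal E\cup\{(t_0,t_1')\}\in\mathcal X$; (d) symmetric conditions for $t_1$; (2) whenever $\mathcal E\in\mathcal X$: (a) $(\lambda x.t_0)\mathcal E(\lambda x.t_1)$ and $v_0\widetilde{\mathcal E}v_1$ imply $t_0\{v_0/x\}\mathcal X_{\mathcal E}t_1\{v_1/x\}$; (b) $E_0[\mathcal Sk.t_0]\mathcal E E_1[\mathcal Sk.t_1]$ and pure contexts $E_0'\widehat{\mathcal E}E_1'$ imply $\langle t_0\{\lambda x.\langle E_0'[E_0[x]]\rangle/k\}\rangle\mathcal X_{\mathcal E}\langle t_1\{\lambda x.\langle E_1'[E_1[x]]\rangle/k\}\rangle$, $x$ fresh. $\approx$ is the largest environmental bisimulation, $t_0\approx_{\mathcal E}t_1$ meaning $(\mathcal E,t_0,t_1)\in\approx$. Contextual equivalence: $t_0\equiv t_1$ iff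 for all contexts $C$ with $C[t_0],C[t_1]$ closed, $C[t_0]\Downarrow$ a value iff $C[t_1]\Downarrow$ a value, and $C[t_0]\Downarrow$ a stuck term iff $C[t_1]\Downarrow$ a stuck term. *)

theory Defs
  imports Main
begin

text \<open>Terms up to alpha-conversion are represented with de Bruijn indices.
  Lam t binds index 0 in t (the variable x); Shift t binds index 0 in t
  (the continuation variable k); Reset t is the delimiter.\<close>

datatype trm = Var nat | Lam trm | App trm trm | Shift trm | Reset trm

fun closed_at :: "nat \<Rightarrow> trm \<Rightarrow> bool" where
  "closed_at k (Var i) = (i < k)"
| "closed_at k (Lam t) = closed_at (Suc k) t"
| "closed_at k (App t u) = (closed_at k t \<and> closed_at k u)"
| "closed_at k (Shift t) = closed_at (Suc k) t"
| "closed_at k (Reset t) = closed_at k t"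

definition closed :: "trm \<Rightarrow> bool" where
  "closed t = closed_at 0 t"

fun lift :: "nat \<Rightarrow> trm \<Rightarrow> trm" where
  "lift k (Var i) = (if i < k then Var i else Var (Suc i))"
| "lift k (Lam t) = Lam (lift (Suc k) t)"
| "lift k (App t u) = App (lift k t) (lift k u)"
| "lift k (Shift t) = Shift (lift (Suc k) t)"
| "lift k (Reset t) = Reset (lift k t)"

fun subst :: "trm \<Rightarrow> nat \<Rightarrow> trm \<Rightarrow> trm" where
  "subst (Var i) k s = (if i < k then Var i else if i = k then s else Var (i - 1))"
| "subst (Lam t) k s = Lam (subst t (Suc k) (lift 0 s))"
| "subst (App t u) k s = App (subst t k s) (subst u k s)"
| "subst (Shift t) k s = Shift (subst t (Suc k) (lift 0 s))"
| "subst (Reset t) k s = Reset (subst t k s)"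

text \<open>t{s/x} where x is the variable bound by the enclosing binder.\<close>
definition subst0 :: "trm \<Rightarrow> trm \<Rightarrow> trm" where
  "subst0 t s = subst t 0 s"

fun is_val :: "trm \<Rightarrow> bool" where
  "is_val (Lam t) = True"
| "is_val _ = False"

text \<open>Raw shape of evaluation contexts: hole, v F, F t, <F>.\<close>
datatype ectx = Hole | ArgC trm ectx | FunC ectx trm | ResetC ectx

fun plug :: "ectx \<Rightarrow> trm \<Rightarrow> trm" where
  "plug Hole t = t"
| "plug (ArgC v F) t = App v (plug F t)"
| "plug (FunC F u) t = App (plug F t) u"
| "plug (ResetC F) t = Reset (plug F t)"

fun lift_ctx :: "nat \<Rightarrow> ectx \<Rightarrow> ectx" where
  "lift_ctx k Hole = Hole"
| "lift_ctx k (ArgC v F) = ArgC (lift k v) (lift_ctx k F)"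
| "lift_ctx k (FunC F u) = FunC (lift_ctx k F) (lift k u)"
| "lift_ctx k (ResetC F) = ResetC (lift_ctx k F)"

fun evctx :: "ectx \<Rightarrow> bool" where
  "evctx Hole = True"
| "evctx (ArgC v F) = (is_val v \<and> evctx F)"
| "evctx (FunC F u) = evctx F"
| "evctx (ResetC F) = evctx F"

fun pure_ctx :: "ectx \<Rightarrow> bool" where
  "pure_ctx Hole = True"
| "pure_ctx (ArgC v F) = (is_val v \<and> pure_ctx F)"
| "pure_ctx (FunC F u) = pure_ctx F"
| "pure_ctx (ResetC F) = False"

inductive step :: "trm \<Rightarrow> trm \<Rightarrow> bool" where
  beta: "\<lbrakk>evctx F; is_val v\<rbrakk> \<Longrightarrow>
     step (plug F (App (Lam t) v)) (plug F (subst0 t v))"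
| shift: "\<lbrakk>evctx F; pure_ctx E\<rbrakk> \<Longrightarrow>
     step (plug F (Reset (plug E (Shift t))))
          (plug F (Reset (subst0 t (Lam (Reset (plug (lift_ctx 0 E) (Var 0)))))))"
| reset: "\<lbrakk>evctx F; is_val v\<rbrakk> \<Longrightarrow> step (plug F (Reset v)) (plug F v)"

abbreviation steps :: "trm \<Rightarrow> trm \<Rightarrow> bool" where
  "steps \<equiv> step\<^sup>*\<^sup>*"

definition irreducible :: "trm \<Rightarrow> bool" where
  "irreducible t = (\<nexists>u. step t u)"

definition stuck :: "trm \<Rightarrow> bool" where
  "stuck t = (\<not> is_val t \<and> irreducible t)"

definition normal_form :: "trm \<Rightarrow> bool" where
  "normal_form t = (is_val t \<or> stuck t)"

definition evals :: "trm \<Rightarrow> trm \<Rightarrow> bool" where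
  "evals t t' = (steps t t' \<and> irreducible t')"

datatype ctx = CHole | CLam ctx | CAppL ctx trm | CAppR trm ctx | CShift ctx | CReset ctx

text \<open>Plugging may capture variables (no shifting), as for contexts.\<close>
fun cplug :: "ctx \<Rightarrow> trm \<Rightarrow> trm" where
  "cplug CHole t = t"
| "cplug (CLam C) t = Lam (cplug C t)"
| "cplug (CAppL C u) t = App (cplug C t) u"
| "cplug (CAppR u C) t = App u (cplug C t)"
| "cplug (CShift C) t = Shift (cplug C t)"
| "cplug (CReset C) t = Reset (cplug C t)"

definition ctx_equiv :: "trm \<Rightarrow> trm \<Rightarrow> bool" where
  "ctx_equiv t0 t1 = (\<forall>C. closed (cplug C t0) \<and> closed (cplug C t1) \<longrightarrow>
      ((\<exists>v. evals (cplug C t0) v \<and> is_val v) \<longleftrightarrow> (\<exists>v. evals (cplug C t1) v \<and> is_val v)) \<and>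
      ((\<exists>s. evals (cplug C t0) s \<and> stuck s) \<longleftrightarrow> (\<exists>s. evals (cplug C t1) s \<and> stuck s)))"

inductive tclos :: "(trm \<times> trm) set \<Rightarrow> trm \<Rightarrow> trm \<Rightarrow> bool" for R where
  base: "(t0, t1) \<in> R \<Longrightarrow> tclos R t0 t1"
| var: "tclos R (Var x) (Var x)"
| lam: "tclos R t0 t1 \<Longrightarrow> tclos R (Lam t0) (Lam t1)"
| app: "tclos R t0 t1 \<Longrightarrow> tclos R u0 u1 \<Longrightarrow> tclos R (App t0 u0) (App t1 u1)"
| shft: "tclos R t0 t1 \<Longrightarrow> tclos R (Shift t0) (Shift t1)"
| rst: "tclos R t0 t1 \<Longrightarrow> tclos R (Reset t0) (Reset t1)"

definition tilde :: "(trm \<times> trm) set \<Rightarrow> (trm \<times> trm) set" where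
  "tilde R = {(t0, t1). tclos R t0 t1 \<and> closed t0 \<and> closed t1}"

inductive hat :: "(trm \<times> trm) set \<Rightarrow> ectx \<Rightarrow> ectx \<Rightarrow> bool" for R where
  hole: "hat R Hole Hole"
| arg: "\<lbrakk>hat R F0 F1; (v0, v1) \<in> tilde R; is_val v0; is_val v1\<rbrakk>
        \<Longrightarrow> hat R (ArgC v0 F0) (ArgC v1 F1)"
| func: "\<lbrakk>hat R F0 F1; (t0, t1) \<in> tilde R\<rbrakk> \<Longrightarrow> hat R (FunC F0 t0) (FunC F1 t1)"
| rst: "hat R F0 F1 \<Longrightarrow> hat R (ResetC F0) (ResetC F1)"

definition environment :: "(trm \<times> trm) set \<Rightarrow> bool" where
  "environment E = (\<forall>(t0, t1) \<in> E. closed t0 \<and> closed t1 \<and>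
      ((is_val t0 \<and> is_val t1) \<or> (stuck t0 \<and> stuck t1)))"

text \<open>An environmental relation: a set of environments together with a set of
  triples (E, t0, t1), the latter written \<open>t0 X_E t1\<close>.\<close>
type_synonym envrel = "(trm \<times> trm) set set \<times> ((trm \<times> trm) set \<times> trm \<times> trm) set"

definition env_relation :: "envrel \<Rightarrow> bool" where
  "env_relation X = ((\<forall>E \<in> fst X. environment E) \<and>
      (\<forall>(E, t0, t1) \<in> snd X. environment E \<and> closed t0 \<and> closed t1))"

definition env_bisim :: "envrel \<Rightarrow> bool" where
  "env_bisim X = (env_relation X \<and>
    (\<forall>E t0 t1. (E, t0, t1) \<in> snd X \<longrightarrow>
       (\<forall>t0'. step t0 t0' \<longrightarrow> (\<exists>t1'. steps t1 t1' \<and> (E, t0', t1') \<in> snd X)) \<and>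
       (is_val t0 \<longrightarrow> (\<exists>v1. steps t1 v1 \<and> is_val v1 \<and> insert (t0, v1) E \<in> fst X)) \<and>
       (stuck t0 \<longrightarrow> (\<exists>t1'. steps t1 t1' \<and> stuck t1' \<and> insert (t0, t1') E \<in> fst X)) \<and>
       (\<forall>t1'. step t1 t1' \<longrightarrow> (\<exists>t0'. steps t0 t0' \<and> (E, t0', t1') \<in> snd X)) \<and>
       (is_val t1 \<longrightarrow> (\<exists>v0. steps t0 v0 \<and> is_val v0 \<and> insert (v0, t1) E \<in> fst X)) \<and>
       (stuck t1 \<longrightarrow> (\<exists>t0'. steps t0 t0' \<and> stuck t0' \<and> insert (t0', t1) E \<in> fst X))) \<and>
    (\<forall>E \<in> fst X.
       (\<forall>b0 b1 v0 v1. (Lam b0, Lam b1) \<in> E \<and> (v0, v1) \<in> tilde E \<and> is_val v0 \<and> is_val v1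
          \<longrightarrow> (E, subst0 b0 v0, subst0 b1 v1) \<in> snd X) \<and>
       (\<forall>E0 E1 s0 s1 E0' E1'.
          pure_ctx E0 \<and> pure_ctx E1 \<and> (plug E0 (Shift s0), plug E1 (Shift s1)) \<in> E \<and>
          pure_ctx E0' \<and> pure_ctx E1' \<and> hat E E0' E1'
          \<longrightarrow> (E, Reset (subst0 s0 (Lam (Reset (plug (lift_ctx 0 E0') (plug (lift_ctx 0 E0) (Var 0)))))),
                  Reset (subst0 s1 (Lam (Reset (plug (lift_ctx 0 E1') (plug (lift_ctx 0 E1) (Var 0)))))))
              \<in> snd X)))"

text \<open>\<open>t0 \<approx>_E t1\<close>: the triple belongs to the largest environmental bisimulation,
  i.e. to some environmental bisimulation.\<close>
definition env_bisimilar :: "(trm \<times> trm) set \<Rightarrow> trm \<Rightarrow> trm \<Rightarrow> bool" where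
  "env_bisimilar E t0 t1 = (\<exists>X. env_bisim X \<and> (E, t0, t1) \<in> snd X)"

end

theory Submission
  imports Defs
begin


section \<open>Structural reduction\<close>

inductive st :: "trm \<Rightarrow> trm \<Rightarrow> bool" where
  sbeta: "is_val v \<Longrightarrow> st (App (Lam b) v) (subst0 b v)"
| sshift: "pure_ctx E \<Longrightarrow> st (Reset (plug E (Shift s)))
      (Reset (subst0 s (Lam (Reset (plug (lift_ctx 0 E) (Var 0))))))"
| sreset: "is_val v \<Longrightarrow> st (Reset v) v"
| sappL: "st t t' \<Longrightarrow> st (App t u) (App t' u)"
| sappR: "is_val v \<Longrightarrow> st u u' \<Longrightarrow> st (App v u) (App v u')"
| srst: "st t t' \<Longrightarrow> st (Reset t) (Reset t')"

lemma is_val_Lam: "is_val v \<longleftrightarrow> (\<exists>b. v = Lam b)"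
  by (cases v) auto

lemma st_evctx: "evctx F \<Longrightarrow> st r r' \<Longrightarrow> st (plug F r) (plug F r')"
  by (induction F) (auto intro: st.intros)

lemma step_st: "step a b \<Longrightarrow> st a b"
  by (induction rule: step.induct) (rule st_evctx, simp, simp add: st.intros)+

lemma st_step: "st a b \<Longrightarrow> step a b"
proof (induction rule: st.induct)
  case (sbeta v b)
  then show ?case using step.beta[of Hole v b] by simp
next
  case (sshift E s)
  then show ?case using step.shift[of Hole E s] by simp
next
  case (sreset v)
  then show ?case using step.reset[of Hole v] by simp
next
  case (sappL t t' u)
  from sappL(2) show ?case
  proof cases
    case (beta F v t)
    then show ?thesis using step.beta[of "FunC F u" v t] by simp
  next
    case (shift F E t)
    then show ?thesis using step.shift[of "FunC F u" E t] by simp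
  next
    case (reset F v)
    then show ?thesis using step.reset[of "FunC F u" v] by simp
  qed
next
  case (sappR v u u')
  from sappR(3) show ?case
  proof cases
    case (beta F w t)
    then show ?thesis using step.beta[of "ArgC v F" w t] sappR(1) by simp
  next
    case (shift F E t)
    then show ?thesis using step.shift[of "ArgC v F" E t] sappR(1) by simp
  next
    case (reset F w)
    then show ?thesis using step.reset[of "ArgC v F" w] sappR(1) by simp
  qed
next
  case (srst t t')
  from srst(2) show ?case
  proof cases
    case (beta F v t)
    then show ?thesis using step.beta[of "ResetC F" v t] by simp
  next
    case (shift F E t)
    then show ?thesis using step.shift[of "ResetC F" E t] by simp
  next
    case (reset F v)
    then show ?thesis using step.reset[of "ResetC F" v] by simp
  qed
qed

lemma step_eq: "step = st"
  by (intro ext iffI) (auto intro: step_st st_step)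

section \<open>Determinism\<close>

lemma val_nostep: "is_val v \<Longrightarrow> \<not> st v u"
  by (auto simp: is_val_Lam elim: st.cases)

lemma lam_nostep[simp]: "\<not> st (Lam b) u"
  by (auto elim: st.cases)

lemma plug_shift_not_val: "\<not> is_val (plug E (Shift s))"
  by (cases E) auto

lemma pure_nostep: "pure_ctx E \<Longrightarrow> \<not> st (plug E (Shift s)) u"
proof (induction E arbitrary: u)
  case Hole
  then show ?case by (auto elim: st.cases)
next
  case (ArgC v F)
  show ?case
  proof
    assume "st (plug (ArgC v F) (Shift s)) u"
    then have "st (App v (plug F (Shift s))) u" by simp
    then show False
    proof cases
      case sbeta
      then show ?thesis using plug_shift_not_val[of F s] by simp
    next
      case sappL
      then show ?thesis using ArgC.prems val_nostep[of v] by simp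
    next
      case sappR
      then show ?thesis using ArgC by simp
    qed
  qed
next
  case (FunC F x)
  show ?case
  proof
    assume "st (plug (FunC F x) (Shift s)) u"
    then have "st (App (plug F (Shift s)) x) u" by simp
    then show False
    proof cases
      case sbeta
      then show ?thesis by (cases F) auto
    next
      case sappL
      then show ?thesis using FunC by simp
    next
      case sappR
      then show ?thesis using plug_shift_not_val[of F s] by simp
    qed
  qed
next
  case (ResetC F)
  then show ?case by simp
qed

lemma plug_shift_inj: "pure_ctx E \<Longrightarrow> pure_ctx E' \<Longrightarrow> plug E (Shift s) = plug E' (Shift s')
  \<Longrightarrow> E = E' \<and> s = s'"
proof (induction E arbitrary: E')
  case Hole
  then show ?case by (cases E') auto
next
  case (ArgC v F)
  then show ?case using plug_shift_not_val by (cases E') (auto)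
next
  case (FunC F x)
  then show ?case using plug_shift_not_val by (cases E') (auto)
next
  case (ResetC F)
  then show ?case by simp
qed

lemma st_det: "st a b \<Longrightarrow> st a c \<Longrightarrow> b = c"
proof (induction arbitrary: c rule: st.induct)
  case (sbeta v b)
  from sbeta(2) show ?case using sbeta(1) val_nostep[of "Lam b"] by cases (auto dest: val_nostep)
next
  case (sshift E s)
  from sshift(2) show ?case using sshift(1)
    by cases (auto dest: plug_shift_inj pure_nostep simp: plug_shift_not_val)
next
  case (sreset v)
  from sreset(2) show ?case using sreset(1)
    by cases (auto dest: val_nostep simp: plug_shift_not_val)
next
  case (sappL t t' u)
  from sappL(3) show ?case
  proof cases
    case sbeta
    then show ?thesis using sappL(1) val_nostep[of "Lam b"] by simp
  next
    case sappL
    then show ?thesis using sappL.IH by blast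
  next
    case sappR
    then show ?thesis using sappL(1) val_nostep[of t] by simp
  qed
next
  case (sappR v u u')
  from sappR(4) show ?case
  proof cases
    case sbeta
    then show ?thesis using sappR(2) val_nostep[of u] by simp
  next
    case sappL
    then show ?thesis using sappR(1) val_nostep[of v] by simp
  next
    case sappR
    then show ?thesis using sappR.IH by blast
  qed
next
  case (srst t t')
  from srst(3) show ?case
  proof cases
    case sshift
    then show ?thesis using srst(1) pure_nostep by blast
  next
    case sreset
    then show ?thesis using srst(1) val_nostep[of t] by simp
  next
    case srst
    then show ?thesis using srst.IH by blast
  qed
qed



lemma closed_at_mono: "closed_at k t \<Longrightarrow> k \<le> j \<Longrightarrow> closed_at j t"
  by (induction t arbitrary: k j) auto

lemma lift_closed: "closed_at k t \<Longrightarrow> k \<le> j \<Longrightarrow> lift j t = t"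
  by (induction t arbitrary: k j) auto

lemma subst_closed: "closed_at k t \<Longrightarrow> k \<le> j \<Longrightarrow> subst t j s = t"
  by (induction t arbitrary: k j s) auto

lemma closed_lift: "closed_at k s \<Longrightarrow> closed_at (Suc k) (lift j s)"
  by (induction s arbitrary: k j) auto

lemma closed_subst: "closed_at (Suc k) t \<Longrightarrow> j \<le> k \<Longrightarrow> closed_at k s \<Longrightarrow> closed_at k (subst t j s)"
  by (induction t arbitrary: k j s) (auto simp: closed_lift)

lemma closed_lift0: "closed t \<Longrightarrow> lift j t = t"
  unfolding closed_def using lift_closed by blast

lemma closed_subst0: "closed t \<Longrightarrow> subst t j s = t"
  unfolding closed_def using subst_closed by blast

fun ctx_closed :: "nat \<Rightarrow> ectx \<Rightarrow> bool" where
  "ctx_closed k Hole = True"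
| "ctx_closed k (ArgC v F) = (closed_at k v \<and> ctx_closed k F)"
| "ctx_closed k (FunC F u) = (closed_at k u \<and> ctx_closed k F)"
| "ctx_closed k (ResetC F) = ctx_closed k F"

lemma closed_plug[simp]: "closed_at k (plug F x) = (ctx_closed k F \<and> closed_at k x)"
  by (induction F) auto

lemma ctx_closed_lift: "ctx_closed k F \<Longrightarrow> ctx_closed (Suc k) (lift_ctx j F)"
  by (induction F) (auto simp: closed_lift)

lemma st_closed: "st a b \<Longrightarrow> closed_at k a \<Longrightarrow> closed_at k b"
proof (induction arbitrary: k rule: st.induct)
  case (sbeta v b)
  then show ?case by (auto simp: subst0_def intro: closed_subst)
next
  case (sshift E s)
  then show ?case by (auto simp: subst0_def intro!: closed_subst ctx_closed_lift)
qed auto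

lemma steps_closed: "st\<^sup>*\<^sup>* a b \<Longrightarrow> closed a \<Longrightarrow> closed b"
  by (induction rule: rtranclp_induct) (auto simp: closed_def intro: st_closed)

lemma classify: "closed_at 0 t \<Longrightarrow> is_val t \<or> (\<exists>u. st t u) \<or> (\<exists>E s. pure_ctx E \<and> t = plug E (Shift s))"
proof (induction t)
  case (Var x)
  then show ?case by simp
next
  case (Lam t)
  then show ?case by simp
next
  case (App t u)
  then have ct: "closed_at 0 t" and cu: "closed_at 0 u" by auto
  from App.IH(1)[OF ct] show ?case
  proof (elim disjE exE conjE)
    assume vt: "is_val t"
    from App.IH(2)[OF cu] show ?thesis
    proof (elim disjE exE conjE)
      assume vu: "is_val u"
      from vt obtain b where "t = Lam b" by (auto simp: is_val_Lam)
      then have "st (App t u) (subst0 b u)" using vu by (simp add: st.sbeta)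
      then show ?thesis by blast
    next
      fix u' assume "st u u'"
      then show ?thesis using vt by (auto intro: st.intros)
    next
      fix E s assume "pure_ctx E" "u = plug E (Shift s)"
      then show ?thesis using vt by (intro disjI2) (rule exI[of _ "ArgC t E"], auto)
    qed
  next
    fix t' assume "st t t'"
    then show ?thesis by (auto intro: st.intros)
  next
    fix E s assume "pure_ctx E" "t = plug E (Shift s)"
    then show ?thesis by (intro disjI2) (rule exI[of _ "FunC E u"], auto)
  qed
next
  case (Shift t)
  then show ?case by (intro disjI2) (rule exI[of _ Hole], auto)
next
  case (Reset t)
  then have ct: "closed_at 0 t" by auto
  from Reset.IH[OF ct] show ?case
    by (elim disjE exE conjE) (auto intro: st.intros)
qed

fun ccomp :: "ctx \<Rightarrow> ctx \<Rightarrow> ctx" where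
  "ccomp CHole D = D"
| "ccomp (CLam C) D = CLam (ccomp C D)"
| "ccomp (CAppL C u) D = CAppL (ccomp C D) u"
| "ccomp (CAppR u C) D = CAppR u (ccomp C D)"
| "ccomp (CShift C) D = CShift (ccomp C D)"
| "ccomp (CReset C) D = CReset (ccomp C D)"

lemma cplug_ccomp[simp]: "cplug (ccomp C D) x = cplug C (cplug D x)"
  by (induction C) auto

fun ecomp :: "ectx \<Rightarrow> ectx \<Rightarrow> ectx" where
  "ecomp Hole D = D"
| "ecomp (ArgC v F) D = ArgC v (ecomp F D)"
| "ecomp (FunC F u) D = FunC (ecomp F D) u"
| "ecomp (ResetC F) D = ResetC (ecomp F D)"

lemma plug_ecomp[simp]: "plug (ecomp A B) x = plug A (plug B x)"
  by (induction A) auto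

lemma pure_ecomp: "pure_ctx A \<Longrightarrow> pure_ctx B \<Longrightarrow> pure_ctx (ecomp A B)"
  by (induction A) auto

lemma lift_ctx_ecomp[simp]: "lift_ctx k (ecomp A B) = ecomp (lift_ctx k A) (lift_ctx k B)"
  by (induction A) auto

section \<open>Compatible closure\<close>

lemma tclos_refl: "tclos R x x"
  by (induction x) (auto intro: tclos.intros)

lemma tclos_cplug: "tclos R x y \<Longrightarrow> tclos R (cplug C x) (cplug C y)"
  by (induction C) (auto intro: tclos.intros tclos_refl)

definition closed_rel :: "(trm \<times> trm) set \<Rightarrow> bool" where
  "closed_rel R = (\<forall>(a, b) \<in> R. closed a \<and> closed b)"

lemma tclos_lift: "tclos R x y \<Longrightarrow> closed_rel R \<Longrightarrow> tclos R (lift k x) (lift k y)"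
proof (induction arbitrary: k rule: tclos.induct)
  case (base t0 t1)
  then have "closed t0" "closed t1" by (auto simp: closed_rel_def)
  then show ?case using base(1) by (simp add: closed_lift0 tclos.base)
qed (auto intro: tclos.intros tclos_refl)

lemma tclos_subst: "tclos R x y \<Longrightarrow> closed_rel R \<Longrightarrow> tclos R u v \<Longrightarrow> tclos R (subst x k u) (subst y k v)"
proof (induction arbitrary: k u v rule: tclos.induct)
  case (base t0 t1)
  then have "closed t0" "closed t1" by (auto simp: closed_rel_def)
  then show ?case using base(1) by (simp add: closed_subst0 tclos.base)
next
  case (lam t0 t1)
  then show ?case by (simp add: tclos.lam tclos_lift)
next
  case (shft t0 t1)
  then show ?case by (simp add: tclos.shft tclos_lift)
qed (auto intro: tclos.intros tclos_refl)

lemma tclos_subst0: "closed_rel R \<Longrightarrow> tclos R x y \<Longrightarrow> tclos R u v \<Longrightarrow> tclos R (subst0 x u) (subst0 y v)"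
  unfolding subst0_def by (rule tclos_subst)

lemma tclos_closed_eq: "tclos R x y \<Longrightarrow> closed_rel R \<Longrightarrow> closed_at k x = closed_at k y"
proof (induction arbitrary: k rule: tclos.induct)
  case (base t0 t1)
  then show ?case by (auto simp: closed_rel_def closed_def intro: closed_at_mono)
qed auto

lemma cplug_closed_eq: "(\<And>j. closed_at j x = closed_at j y) \<Longrightarrow> closed_at k (cplug C x) = closed_at k (cplug C y)"
  by (induction C arbitrary: k) auto



lemma star_appL: "st\<^sup>*\<^sup>* a b \<Longrightarrow> st\<^sup>*\<^sup>* (App a u) (App b u)"
  by (induction rule: rtranclp_induct) (auto intro: rtranclp.rtrancl_into_rtrancl st.sappL)

lemma star_appR: assumes "is_val v" shows "st\<^sup>*\<^sup>* a b \<Longrightarrow> st\<^sup>*\<^sup>* (App v a) (App v b)"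
  by (induction rule: rtranclp_induct) (auto intro: rtranclp.rtrancl_into_rtrancl st.sappR[OF assms])

lemma star_rst: "st\<^sup>*\<^sup>* a b \<Longrightarrow> st\<^sup>*\<^sup>* (Reset a) (Reset b)"
  by (induction rule: rtranclp_induct) (auto intro: rtranclp.rtrancl_into_rtrancl st.srst)

lemma plus_appL: "st\<^sup>+\<^sup>+ a b \<Longrightarrow> st\<^sup>+\<^sup>+ (App a u) (App b u)"
  by (induction rule: tranclp_induct) (auto intro: tranclp.trancl_into_trancl st.sappL)

lemma plus_appR: assumes "is_val v" shows "st\<^sup>+\<^sup>+ a b \<Longrightarrow> st\<^sup>+\<^sup>+ (App v a) (App v b)"
  by (induction rule: tranclp_induct) (auto intro: tranclp.trancl_into_trancl st.sappR[OF assms])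

lemma plus_rst: "st\<^sup>+\<^sup>+ a b \<Longrightarrow> st\<^sup>+\<^sup>+ (Reset a) (Reset b)"
  by (induction rule: tranclp_induct) (auto intro: tranclp.trancl_into_trancl st.srst)

locale red =
  fixes t t' :: trm
  assumes tt: "st t t'" and ct: "closed t" and ct': "closed t'"
begin

abbreviation S :: "trm \<Rightarrow> trm \<Rightarrow> bool" where
  "S \<equiv> tclos {(t, t')}"

lemma cr: "closed_rel {(t, t')}"
  using ct ct' by (simp add: closed_rel_def)

lemma t_not_val: "\<not> is_val t"
  using tt val_nostep by blast

lemma t_not_stk: "pure_ctx E \<Longrightarrow> t \<noteq> plug E (Shift s)"
  using tt pure_nostep by blast

lemma t_step: "st t a \<Longrightarrow> a = t'"
  using tt st_det by blast

lemma V0: "S (Lam b) y \<Longrightarrow> \<exists>b'. y = Lam b' \<and> S b b'"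
  by (erule tclos.cases) (use t_not_val in auto)

lemma V0r: "S x (Lam b) \<Longrightarrow> is_val x \<Longrightarrow> \<exists>b'. x = Lam b' \<and> S b' b"
  by (erule tclos.cases) (use t_not_val in auto)

lemma V0v: "S v y \<Longrightarrow> is_val v \<Longrightarrow> is_val y"
  using V0 by (auto simp: is_val_Lam)

lemma V1: assumes "S x V" "is_val V"
  shows "\<exists>x'. (x' = x \<or> st x x') \<and> is_val x' \<and> S x' V"
  using assms(1)
proof cases
  case base
  then show ?thesis using assms(2) tt tclos_refl by auto
qed (use assms in auto)

lemma S_plug_same: "S x y \<Longrightarrow> S (plug F x) (plug F y)"
  by (induction F) (auto intro: tclos.intros tclos_refl)

lemma S_plug_lift: "\<forall>k x y. S x y \<longrightarrow> S (plug (lift_ctx k E) x) (plug (lift_ctx k E) y)"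
  using S_plug_same by blast

lemma shapeF: "pure_ctx E \<Longrightarrow> S (plug E (Shift s)) X \<Longrightarrow>
   \<exists>E' s'. X = plug E' (Shift s') \<and> pure_ctx E' \<and> S s s' \<and>
     (\<forall>k x y. S x y \<longrightarrow> S (plug (lift_ctx k E) x) (plug (lift_ctx k E') y))"
proof (induction E arbitrary: X)
  case Hole
  from Hole.prems(2) show ?case
  proof (cases rule: tclos.cases)
    case base
    then show ?thesis using t_not_stk[of Hole s] by simp
  next
    case (shft s0 s1)
    then show ?thesis by - (rule exI[of _ Hole], rule exI[of _ s1], auto)
  qed auto
next
  case (ArgC v F)
  from ArgC.prems(2) show ?case
  proof (cases rule: tclos.cases)
    case base
    then show ?thesis using t_not_stk[of "ArgC v F" s] ArgC.prems(1) by simp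
  next
    case (app t0 t1 u0 u1)
    then have vv: "is_val v" "S v t1" using ArgC.prems(1) by auto
    then have "is_val t1" using V0v by blast
    from ArgC.IH[of u1] app ArgC.prems(1) obtain E' s' where
      h: "u1 = plug E' (Shift s')" "pure_ctx E'" "S s s'"
        "\<forall>k x y. S x y \<longrightarrow> S (plug (lift_ctx k F) x) (plug (lift_ctx k E') y)" by auto
    show ?thesis
      apply (rule exI[of _ "ArgC t1 E'"], rule exI[of _ s'])
      using h app \<open>is_val t1\<close> vv by (auto intro: tclos.app tclos_lift cr)
  qed auto
next
  case (FunC F u)
  from FunC.prems(2) show ?case
  proof (cases rule: tclos.cases)
    case base
    then show ?thesis using t_not_stk[of "FunC F u" s] FunC.prems(1) by simp
  next
    case (app t0 t1 u0 u1)
    from FunC.IH[of t1] app FunC.prems(1) obtain E' s' where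
      h: "t1 = plug E' (Shift s')" "pure_ctx E'" "S s s'"
        "\<forall>k x y. S x y \<longrightarrow> S (plug (lift_ctx k F) x) (plug (lift_ctx k E') y)" by auto
    show ?thesis
      apply (rule exI[of _ "FunC E' u1"], rule exI[of _ s'])
      using h app by (auto intro: tclos.app tclos_lift cr)
  qed auto
next
  case (ResetC F)
  then show ?case by simp
qed

lemma shapeB: "pure_ctx E \<Longrightarrow> S X (plug E (Shift s)) \<Longrightarrow>
   \<exists>X' E' s'. st\<^sup>*\<^sup>* X X' \<and> X' = plug E' (Shift s') \<and> pure_ctx E' \<and> S s' s \<and>
     (\<forall>k x y. S x y \<longrightarrow> S (plug (lift_ctx k E') x) (plug (lift_ctx k E) y))"
proof (induction E arbitrary: X)
  case Hole
  from Hole.prems(2) show ?case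
  proof (cases rule: tclos.cases)
    case base
    then show ?thesis using tt S_plug_lift[of Hole] tclos_refl[of _ s]
      by - (rule exI[of _ t'], rule exI[of _ Hole], rule exI[of _ s], auto simp del: plug.simps lift_ctx.simps)
  next
    case (shft s0 s1)
    then show ?thesis by - (rule exI[of _ X], rule exI[of _ Hole], rule exI[of _ s0], auto)
  qed auto
next
  case (ArgC v F)
  from ArgC.prems(2) show ?case
  proof (cases rule: tclos.cases)
    case base
    then show ?thesis using tt ArgC.prems(1) S_plug_lift[of "ArgC v F"] tclos_refl[of _ s]
      by - (rule exI[of _ t'], rule exI[of _ "ArgC v F"], rule exI[of _ s], auto simp del: plug.simps lift_ctx.simps)
  next
    case (app t0 t1 u0 u1)
    then have vv: "is_val v" "S t0 v" using ArgC.prems(1) by auto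
    then obtain A' where A': "A' = t0 \<or> st t0 A'" "is_val A'" "S A' v" using V1 by blast
    from ArgC.IH[of u0] app ArgC.prems(1) obtain Y' E' s' where
      h: "st\<^sup>*\<^sup>* u0 Y'" "Y' = plug E' (Shift s')" "pure_ctx E'" "S s' s"
        "\<forall>k x y. S x y \<longrightarrow> S (plug (lift_ctx k E') x) (plug (lift_ctx k F) y)" by auto
    have "st\<^sup>*\<^sup>* X (App A' u0)" using A'(1) app by (auto intro: star_appL)
    also have "st\<^sup>*\<^sup>* (App A' u0) (App A' Y')" using star_appR[OF A'(2) h(1)] .
    finally have XY: "st\<^sup>*\<^sup>* X (App A' Y')" .
    show ?thesis
      apply (rule exI[of _ "App A' Y'"], rule exI[of _ "ArgC A' E'"], rule exI[of _ s'])
      using XY h app A' vv by (auto intro: tclos.app tclos_lift cr)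
  qed auto
next
  case (FunC F u)
  from FunC.prems(2) show ?case
  proof (cases rule: tclos.cases)
    case base
    then show ?thesis using tt FunC.prems(1) S_plug_lift[of "FunC F u"] tclos_refl[of _ s]
      by - (rule exI[of _ t'], rule exI[of _ "FunC F u"], rule exI[of _ s], auto simp del: plug.simps lift_ctx.simps)
  next
    case (app t0 t1 u0 u1)
    from FunC.IH[of t0] app FunC.prems(1) obtain Y' E' s' where
      h: "st\<^sup>*\<^sup>* t0 Y'" "Y' = plug E' (Shift s')" "pure_ctx E'" "S s' s"
        "\<forall>k x y. S x y \<longrightarrow> S (plug (lift_ctx k E') x) (plug (lift_ctx k F) y)" by auto
    have XY: "st\<^sup>*\<^sup>* X (App Y' u0)" using h(1) app by (auto intro: star_appL)
    show ?thesis
      apply (rule exI[of _ "App Y' u0"], rule exI[of _ "FunC E' u0"], rule exI[of _ s'])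
      using XY h app by (auto intro: tclos.app tclos_lift cr)
  qed auto
next
  case (ResetC F)
  then show ?case by simp
qed

end



lemma opt_star: "x' = x \<or> st x x' \<Longrightarrow> st\<^sup>*\<^sup>* x x'"
  by auto

context red
begin

lemma inv_App: "S (App x u) y \<Longrightarrow> (App x u = t \<and> y = t') \<or> (\<exists>x' u'. y = App x' u' \<and> S x x' \<and> S u u')"
  by (erule tclos.cases) auto

lemma inv_Reset: "S (Reset x) y \<Longrightarrow> (Reset x = t \<and> y = t') \<or> (\<exists>x'. y = Reset x' \<and> S x x')"
  by (erule tclos.cases) auto

lemma invr_App: "S y (App x u) \<Longrightarrow> (y = t \<and> App x u = t') \<or> (\<exists>x' u'. y = App x' u' \<and> S x' x \<and> S u' u)"
  by (erule tclos.cases) auto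

lemma invr_Reset: "S y (Reset x) \<Longrightarrow> (y = t \<and> Reset x = t') \<or> (\<exists>x'. y = Reset x' \<and> S x' x)"
  by (erule tclos.cases) auto

lemma Kbase: "st a a' \<Longrightarrow> a = t \<Longrightarrow> b = t' \<Longrightarrow> S a' b"
  using t_step tclos_refl by auto

lemma K: "st a a' \<Longrightarrow> S a b \<Longrightarrow> S a' b \<or> (\<exists>b'. st b b' \<and> S a' b')"
proof (induction arbitrary: b rule: st.induct)
  case (sbeta v bd)
  from inv_App[OF sbeta.prems] show ?case
  proof (elim disjE exE conjE)
    assume "App (Lam bd) v = t" "b = t'"
    then show ?thesis using Kbase[OF st.sbeta[OF sbeta.hyps]] by blast
  next
    fix t1 u1 assume app: "b = App t1 u1" "S (Lam bd) t1" "S v u1"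
    then obtain bd' where bd': "t1 = Lam bd'" "S bd bd'" using V0 by blast
    have "is_val u1" using V0v app sbeta.hyps by auto
    then have "st b (subst0 bd' u1)" using app bd' by (simp add: st.sbeta)
    moreover have "S (subst0 bd v) (subst0 bd' u1)"
      using tclos_subst0[OF cr bd'(2)] app by auto
    ultimately show ?thesis by blast
  qed
next
  case (sshift E s)
  from inv_Reset[OF sshift.prems] show ?case
  proof (elim disjE exE conjE)
    assume "Reset (plug E (Shift s)) = t" "b = t'"
    then show ?thesis using Kbase[OF st.sshift[OF sshift.hyps]] by blast
  next
    fix t1 assume rst: "b = Reset t1" "S (plug E (Shift s)) t1"
    then obtain E' s' where h: "t1 = plug E' (Shift s')" "pure_ctx E'" "S s s'"
      "\<forall>k x y. S x y \<longrightarrow> S (plug (lift_ctx k E) x) (plug (lift_ctx k E') y)"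
      using shapeF[OF sshift.hyps] by blast
    have "st b (Reset (subst0 s' (Lam (Reset (plug (lift_ctx 0 E') (Var 0))))))"
      using rst h by (simp add: st.sshift)
    moreover have "S (Reset (subst0 s (Lam (Reset (plug (lift_ctx 0 E) (Var 0))))))
        (Reset (subst0 s' (Lam (Reset (plug (lift_ctx 0 E') (Var 0))))))"
      using h(4) by (auto intro!: tclos.rst tclos.lam tclos_subst0[OF cr h(3)] tclos.var)
    ultimately show ?thesis by blast
  qed
next
  case (sreset v)
  from inv_Reset[OF sreset.prems] show ?case
  proof (elim disjE exE conjE)
    assume "Reset v = t" "b = t'"
    then show ?thesis using Kbase[OF st.sreset[OF sreset.hyps]] by blast
  next
    fix t1 assume rst: "b = Reset t1" "S v t1"
    then have "is_val t1" using V0v sreset.hyps by auto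
    then show ?thesis using rst by (auto intro: st.sreset)
  qed
next
  case (sappL t1 t1' u)
  from inv_App[OF sappL.prems] show ?case
  proof (elim disjE exE conjE)
    assume "App t1 u = t" "b = t'"
    then show ?thesis using Kbase[OF st.sappL[OF sappL.hyps]] by blast
  next
    fix t2 u1 assume app: "b = App t2 u1" "S t1 t2" "S u u1"
    from sappL.IH[OF app(2)] app show ?thesis
      by (auto intro: tclos.app st.sappL)
  qed
next
  case (sappR v u u')
  from inv_App[OF sappR.prems] show ?case
  proof (elim disjE exE conjE)
    assume "App v u = t" "b = t'"
    then show ?thesis using Kbase[OF st.sappR[OF sappR.hyps]] by blast
  next
    fix t2 u1 assume app: "b = App t2 u1" "S v t2" "S u u1"
    then have "is_val t2" using V0v sappR.hyps by auto
    from sappR.IH[OF app(3)] app \<open>is_val t2\<close> show ?thesis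
      by (auto intro: tclos.app st.sappR)
  qed
next
  case (srst t1 t1')
  from inv_Reset[OF srst.prems] show ?case
  proof (elim disjE exE conjE)
    assume "Reset t1 = t" "b = t'"
    then show ?thesis using Kbase[OF st.srst[OF srst.hyps]] by blast
  next
    fix t2 assume rst: "b = Reset t2" "S t1 t2"
    from srst.IH[OF rst(2)] rst show ?thesis
      by (auto intro: tclos.rst st.srst)
  qed
qed

lemma K2base: "st b b' \<Longrightarrow> a = t \<Longrightarrow> b = t' \<Longrightarrow> \<exists>a'. st\<^sup>+\<^sup>+ a a' \<and> S a' b'"
proof -
  assume h: "st b b'" "a = t" "b = t'"
  then have "st\<^sup>+\<^sup>+ a b'" using tt
    by (auto intro: tranclp.trancl_into_trancl[OF tranclp.r_into_trancl])
  then show ?thesis using tclos_refl by blast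
qed

lemma K2: "st b b' \<Longrightarrow> S a b \<Longrightarrow> \<exists>a'. st\<^sup>+\<^sup>+ a a' \<and> S a' b'"
proof (induction arbitrary: a rule: st.induct)
  case (sbeta v bd)
  from invr_App[OF sbeta.prems] show ?case
  proof (elim disjE exE conjE)
    assume "a = t" "App (Lam bd) v = t'"
    then show ?thesis using K2base[OF st.sbeta[OF sbeta.hyps]] by blast
  next
    fix t0 u0 assume app: "a = App t0 u0" "S t0 (Lam bd)" "S u0 v"
    then obtain A' where A': "A' = t0 \<or> st t0 A'" "is_val A'" "S A' (Lam bd)" using V1 by force
    then obtain bd' where bd': "A' = Lam bd'" "S bd' bd" using V0r by blast
    obtain W' where W': "W' = u0 \<or> st u0 W'" "is_val W'" "S W' v" using V1 app sbeta.hyps by blast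
    have "st\<^sup>*\<^sup>* a (App A' u0)" using app A'(1) by (auto intro: star_appL)
    also have "st\<^sup>*\<^sup>* (App A' u0) (App A' W')" using star_appR[OF A'(2) opt_star[OF W'(1)]] .
    finally have "st\<^sup>+\<^sup>+ a (subst0 bd' W')"
      using bd'(1) W'(2) by (auto intro: rtranclp_into_tranclp1 st.sbeta)
    moreover have "S (subst0 bd' W') (subst0 bd v)"
      using tclos_subst0[OF cr bd'(2) W'(3)] .
    ultimately show ?thesis by blast
  qed
next
  case (sshift E s)
  from invr_Reset[OF sshift.prems] show ?case
  proof (elim disjE exE conjE)
    assume "a = t" "Reset (plug E (Shift s)) = t'"
    then show ?thesis using K2base[OF st.sshift[OF sshift.hyps]] by blast
  next
    fix t0 assume rst: "a = Reset t0" "S t0 (plug E (Shift s))"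
    then obtain X' E' s' where h: "st\<^sup>*\<^sup>* t0 X'" "X' = plug E' (Shift s')" "pure_ctx E'" "S s' s"
      "\<forall>k x y. S x y \<longrightarrow> S (plug (lift_ctx k E') x) (plug (lift_ctx k E) y)"
      using shapeB[OF sshift.hyps] by blast
    have "st\<^sup>*\<^sup>* a (Reset X')" using h(1) rst by (simp add: star_rst)
    then have "st\<^sup>+\<^sup>+ a (Reset (subst0 s' (Lam (Reset (plug (lift_ctx 0 E') (Var 0))))))"
      using h by (auto intro: rtranclp_into_tranclp1 st.sshift)
    moreover have "S (Reset (subst0 s' (Lam (Reset (plug (lift_ctx 0 E') (Var 0))))))
        (Reset (subst0 s (Lam (Reset (plug (lift_ctx 0 E) (Var 0))))))"
      using h(5) by (auto intro!: tclos.rst tclos.lam tclos_subst0[OF cr h(4)] tclos.var)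
    ultimately show ?thesis by blast
  qed
next
  case (sreset v)
  from invr_Reset[OF sreset.prems] show ?case
  proof (elim disjE exE conjE)
    assume "a = t" "Reset v = t'"
    then show ?thesis using K2base[OF st.sreset[OF sreset.hyps]] by blast
  next
    fix t0 assume rst: "a = Reset t0" "S t0 v"
    then obtain X' where X': "X' = t0 \<or> st t0 X'" "is_val X'" "S X' v" using V1 sreset.hyps by blast
    have "st\<^sup>*\<^sup>* a (Reset X')" using opt_star[OF X'(1)] rst by (simp add: star_rst)
    then have "st\<^sup>+\<^sup>+ a X'" using X'(2) by (auto intro: rtranclp_into_tranclp1 st.sreset)
    then show ?thesis using X'(3) by blast
  qed
next
  case (sappL t1 t1' u)
  from invr_App[OF sappL.prems] show ?case
  proof (elim disjE exE conjE)
    assume "a = t" "App t1 u = t'"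
    then show ?thesis using K2base[OF st.sappL[OF sappL.hyps]] by blast
  next
    fix t0 u0 assume app: "a = App t0 u0" "S t0 t1" "S u0 u"
    from sappL.IH[OF app(2)] obtain A' where "st\<^sup>+\<^sup>+ t0 A'" "S A' t1'" by blast
    then show ?thesis using app by (auto intro: tclos.app plus_appL)
  qed
next
  case (sappR v u u')
  from invr_App[OF sappR.prems] show ?case
  proof (elim disjE exE conjE)
    assume "a = t" "App v u = t'"
    then show ?thesis using K2base[OF st.sappR[OF sappR.hyps]] by blast
  next
    fix t0 u0 assume app: "a = App t0 u0" "S t0 v" "S u0 u"
    then obtain A' where A': "A' = t0 \<or> st t0 A'" "is_val A'" "S A' v" using V1 sappR.hyps by blast
    from sappR.IH[OF app(3)] obtain W' where W': "st\<^sup>+\<^sup>+ u0 W'" "S W' u'" by blast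
    have "st\<^sup>*\<^sup>* a (App A' u0)" using app A'(1) by (auto intro: star_appL)
    also have "st\<^sup>+\<^sup>+ (App A' u0) (App A' W')" using plus_appR[OF A'(2) W'(1)] .
    finally have "st\<^sup>+\<^sup>+ a (App A' W')" .
    then show ?thesis using A'(3) W'(2) by (auto intro: tclos.app)
  qed
next
  case (srst t1 t1')
  from invr_Reset[OF srst.prems] show ?case
  proof (elim disjE exE conjE)
    assume "a = t" "Reset t1 = t'"
    then show ?thesis using K2base[OF st.srst[OF srst.hyps]] by blast
  next
    fix t0 assume rst: "a = Reset t0" "S t0 t1"
    from srst.IH[OF rst(2)] obtain A' where "st\<^sup>+\<^sup>+ t0 A'" "S A' t1'" by blast
    then show ?thesis using rst by (auto intro: tclos.rst plus_rst)
  qed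
qed

end



definition irr :: "trm \<Rightarrow> bool" where "irr m = (\<nexists>u. st m u)"

context red
begin

lemma T1: "st\<^sup>*\<^sup>* a n \<Longrightarrow> irr n \<Longrightarrow> S a b \<Longrightarrow> \<exists>m. st\<^sup>*\<^sup>* b m \<and> irr m \<and> (is_val m = is_val n)"
proof (induction arbitrary: b rule: converse_rtranclp_induct)
  case base
  show ?case
  proof (cases "is_val n")
    case True
    then obtain bd where "n = Lam bd" by (auto simp: is_val_Lam)
    then obtain bd' where "b = Lam bd'" using V0 base.prems(2) by blast
    then show ?thesis using True by (auto simp: irr_def)
  next
    case False
    have "irr b"
    proof (unfold irr_def, rule notI, elim exE)
      fix u assume "st b u"
      then obtain a' where "st\<^sup>+\<^sup>+ n a'" using K2 base.prems(2) by blast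
      then obtain a1 where "st n a1" by (auto dest: tranclpD)
      then show False using base.prems(1) by (auto simp: irr_def)
    qed
    moreover have "\<not> is_val b"
    proof
      assume "is_val b"
      then obtain n' where "n' = n \<or> st n n'" "is_val n'" using V1 base.prems(2) by blast
      then show False using False base.prems(1) by (auto simp: irr_def)
    qed
    ultimately show ?thesis using False by blast
  qed
next
  case (step a a1)
  from K[OF step.hyps(1) step.prems(2)] show ?case
  proof
    assume "S a1 b"
    then show ?thesis using step.IH step.prems(1) by blast
  next
    assume "\<exists>b'. st b b' \<and> S a1 b'"
    then obtain b' where "st b b'" "S a1 b'" by blast
    then show ?thesis using step.IH[of b'] step.prems(1)
      by (meson converse_rtranclp_into_rtranclp)
  qed
qed

lemma T2: "st\<^sup>*\<^sup>* b n \<Longrightarrow> irr n \<Longrightarrow> closed n \<Longrightarrow> S a b \<Longrightarrow> \<exists>m. st\<^sup>*\<^sup>* a m \<and> irr m \<and> (is_val m = is_val n)"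
proof (induction arbitrary: a rule: converse_rtranclp_induct)
  case base
  show ?case
  proof (cases "is_val n")
    case True
    then obtain a' where "a' = a \<or> st a a'" "is_val a'" "S a' n" using V1 base.prems(3) by blast
    then show ?thesis using True val_nostep by (auto simp: irr_def)
  next
    case False
    from classify[of n] base.prems(2) False base.prems(1)
    obtain E s where Es: "pure_ctx E" "n = plug E (Shift s)"
      by (auto simp: closed_def irr_def)
    then obtain X' E' s' where h: "st\<^sup>*\<^sup>* a X'" "X' = plug E' (Shift s')" "pure_ctx E'"
      using shapeB base.prems(3) by blast
    then have "irr X'" "\<not> is_val X'" using pure_nostep plug_shift_not_val by (auto simp: irr_def)
    then show ?thesis using h(1) False by blast
  qed
next
  case (step b b1)
  from K2[OF step.hyps(1) step.prems(3)] obtain a1 where "st\<^sup>+\<^sup>+ a a1" "S a1 b1" by blast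
  then show ?case using step.IH[of a1] step.prems(1,2)
    by (meson rtranclp_trans tranclp_into_rtranclp)
qed

end

lemma evals_st: "evals x v = (st\<^sup>*\<^sup>* x v \<and> irr v)"
  by (simp add: evals_def irreducible_def irr_def step_eq)

lemma stuck_st: "stuck s = (\<not> is_val s \<and> irr s)"
  by (simp add: stuck_def irreducible_def irr_def step_eq)

lemma red_sound:
  assumes tt: "st t t'" and ct: "closed t"
  shows "ctx_equiv t t'"
proof -
  have ct': "closed t'" using st_closed tt ct by (auto simp: closed_def)
  interpret red t t' using tt ct ct' by unfold_locales
  show ?thesis unfolding ctx_equiv_def
  proof (intro allI impI)
    fix C assume cl: "closed (cplug C t) \<and> closed (cplug C t')"
    have S: "S (cplug C t) (cplug C t')" by (rule tclos_cplug) (simp add: tclos.base)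
    have A: "(\<exists>m. st\<^sup>*\<^sup>* (cplug C t) m \<and> irr m \<and> P (is_val m)) =
          (\<exists>m. st\<^sup>*\<^sup>* (cplug C t') m \<and> irr m \<and> P (is_val m))" for P
    proof
      assume "\<exists>m. st\<^sup>*\<^sup>* (cplug C t) m \<and> irr m \<and> P (is_val m)"
      then obtain m where m: "st\<^sup>*\<^sup>* (cplug C t) m" "irr m" "P (is_val m)" by blast
      obtain m' where "st\<^sup>*\<^sup>* (cplug C t') m'" "irr m'" "is_val m' = is_val m"
        using T1[OF m(1,2) S] by blast
      then show "\<exists>m. st\<^sup>*\<^sup>* (cplug C t') m \<and> irr m \<and> P (is_val m)"
        using m(3) by auto
    next
      assume "\<exists>m. st\<^sup>*\<^sup>* (cplug C t') m \<and> irr m \<and> P (is_val m)"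
      then obtain m where m: "st\<^sup>*\<^sup>* (cplug C t') m" "irr m" "P (is_val m)" by blast
      then have "closed m" using steps_closed cl by blast
      obtain m' where "st\<^sup>*\<^sup>* (cplug C t) m'" "irr m'" "is_val m' = is_val m"
        using T2[OF m(1,2) \<open>closed m\<close> S] by blast
      then show "\<exists>m. st\<^sup>*\<^sup>* (cplug C t) m \<and> irr m \<and> P (is_val m)"
        using m(3) by auto
    qed
    show "((\<exists>v. evals (cplug C t) v \<and> is_val v) = (\<exists>v. evals (cplug C t') v \<and> is_val v)) \<and>
          ((\<exists>s. evals (cplug C t) s \<and> stuck s) = (\<exists>s. evals (cplug C t') s \<and> stuck s))"
      using A[of "\<lambda>x. x"] A[of Not] by (auto simp: evals_st stuck_st)
  qed
qed



definition coterm :: "trm \<Rightarrow> trm \<Rightarrow> bool" where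
  "coterm a b = (((\<exists>v. evals a v \<and> is_val v) = (\<exists>v. evals b v \<and> is_val v)) \<and>
      ((\<exists>s. evals a s \<and> stuck s) = (\<exists>s. evals b s \<and> stuck s)))"

lemma ce_def2: "ctx_equiv x y = (\<forall>C. closed (cplug C x) \<and> closed (cplug C y) \<longrightarrow> coterm (cplug C x) (cplug C y))"
  unfolding ctx_equiv_def coterm_def by blast

lemma ce_sym: "ctx_equiv x y \<Longrightarrow> ctx_equiv y x"
  unfolding ctx_equiv_def by blast

lemma closed_all: "closed x \<Longrightarrow> closed_at j x"
  unfolding closed_def using closed_at_mono by blast

lemma closed_cplug_iff: "closed x \<Longrightarrow> closed y \<Longrightarrow> closed (cplug C x) = closed (cplug C y)"
proof -
  assume "closed x" "closed y"
  then have "closed_at j x = closed_at j y" for j using closed_all by blast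
  then show ?thesis unfolding closed_def by (rule cplug_closed_eq)
qed

lemma ce_trans: "closed x \<Longrightarrow> closed y \<Longrightarrow> closed z \<Longrightarrow> ctx_equiv x y \<Longrightarrow> ctx_equiv y z \<Longrightarrow> ctx_equiv x z"
  unfolding ce_def2 coterm_def
  by (metis closed_cplug_iff)

lemma steps_sound: "st\<^sup>*\<^sup>* t u \<Longrightarrow> closed t \<Longrightarrow> ctx_equiv t u \<and> closed u"
proof (induction rule: rtranclp_induct)
  case base
  then show ?case by (simp add: ctx_equiv_def)
next
  case (step y z)
  then have "closed y" "ctx_equiv t y" by auto
  moreover have "closed z" using st_closed step(2) \<open>closed y\<close> by (auto simp: closed_def)
  moreover have "ctx_equiv y z" using red_sound step(2) \<open>closed y\<close> by blast
  ultimately show ?case using ce_trans step.prems by blast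
qed

lemma tclos_coterm:
  assumes cr: "closed_rel R" and ce: "\<forall>(a, b) \<in> R. ctx_equiv a b"
  shows "tclos R x y \<Longrightarrow> closed (cplug C x) \<Longrightarrow> coterm (cplug C x) (cplug C y)"
proof (induction arbitrary: C rule: tclos.induct)
  case (base t0 t1)
  then have "closed t0" "closed t1" "ctx_equiv t0 t1" using cr ce by (auto simp: closed_rel_def)
  then show ?case using base.prems closed_cplug_iff ce_def2 by blast
next
  case (var x)
  then show ?case by (simp add: coterm_def)
next
  case (lam t0 t1)
  then show ?case using lam.IH[of "ccomp C (CLam CHole)"] by simp
next
  case (app t0 t1 u0 u1)
  have 1: "coterm (cplug C (App t0 u0)) (cplug C (App t1 u0))"
    using app.IH(1)[of "ccomp C (CAppL CHole u0)"] app.prems by simp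
  have "closed_at j (App t0 u0) = closed_at j (App t1 u0)" for j
    using tclos_closed_eq[OF app.hyps(1) cr] by simp
  then have "closed (cplug C (App t1 u0))" using app.prems cplug_closed_eq unfolding closed_def by blast
  then have 2: "coterm (cplug C (App t1 u0)) (cplug C (App t1 u1))"
    using app.IH(2)[of "ccomp C (CAppR t1 CHole)"] by simp
  from 1 2 show ?case unfolding coterm_def by blast
next
  case (shft t0 t1)
  then show ?case using shft.IH[of "ccomp C (CShift CHole)"] by simp
next
  case (rst t0 t1)
  then show ?case using rst.IH[of "ccomp C (CReset CHole)"] by simp
qed

lemma tclos_ce:
  assumes "closed_rel R" "\<forall>(a, b) \<in> R. ctx_equiv a b" "tclos R x y"
  shows "ctx_equiv x y"
  unfolding ce_def2 using tclos_coterm[OF assms(1,2,3)] by blast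

lemma hat_closed: "hat R F0 F1 \<Longrightarrow> ctx_closed 0 F0 \<and> ctx_closed 0 F1"
  by (induction rule: hat.induct) (auto simp: tilde_def closed_def)

lemma hat_tclos: "hat R F0 F1 \<Longrightarrow> tclos R x y \<Longrightarrow> tclos R (plug F0 x) (plug F1 y)"
  by (induction rule: hat.induct) (auto simp: tilde_def intro: tclos.intros)



definition envs :: "(trm \<times> trm) set set" where
  "envs = {E. environment E \<and> (\<forall>(a, b) \<in> E. ctx_equiv a b)}"

definition trips :: "((trm \<times> trm) set \<times> trm \<times> trm) set" where
  "trips = {(E, a, b). E \<in> envs \<and> closed a \<and> closed b \<and> ctx_equiv a b}"

lemma envs_closed_rel: "E \<in> envs \<Longrightarrow> closed_rel E"
  by (auto simp: envs_def environment_def closed_rel_def)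

lemma envs_insert: "E \<in> envs \<Longrightarrow> closed a \<Longrightarrow> closed b \<Longrightarrow> ctx_equiv a b \<Longrightarrow>
    (is_val a \<and> is_val b) \<or> (stuck a \<and> stuck b) \<Longrightarrow> insert (a, b) E \<in> envs"
  by (auto simp: envs_def environment_def)

lemma val_evals: "is_val v \<Longrightarrow> evals v v"
  unfolding evals_def irreducible_def step_eq using val_nostep by blast

lemma stuck_evals: "stuck v \<Longrightarrow> evals v v"
  by (auto simp: evals_def stuck_def)

lemma one_side:
  assumes c0: "closed t0" and c1: "closed t1" and ce: "ctx_equiv t0 t1"
  shows "(\<forall>t0'. step t0 t0' \<longrightarrow> closed t0' \<and> ctx_equiv t0' t1) \<and>
    (is_val t0 \<longrightarrow> (\<exists>v1. steps t1 v1 \<and> is_val v1 \<and> closed v1 \<and> ctx_equiv t0 v1)) \<and>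
    (stuck t0 \<longrightarrow> (\<exists>s. steps t1 s \<and> stuck s \<and> closed s \<and> ctx_equiv t0 s))"
proof (intro conjI allI impI)
  fix t0' assume "step t0 t0'"
  then have s: "st t0 t0'" by (simp add: step_eq)
  then have c0': "closed t0'" using st_closed c0 by (auto simp: closed_def)
  have "ctx_equiv t0' t0" using red_sound[OF s c0] ce_sym by blast
  then show "ctx_equiv t0' t1" using c0' ce_trans[OF c0' c0 c1] ce by blast
next
  fix t0' assume "step t0 t0'"
  then have s: "st t0 t0'" by (simp add: step_eq)
  then show "closed t0'" using st_closed c0 by (auto simp: closed_def)
next
  assume v: "is_val t0"
  have "\<exists>v. evals t1 v \<and> is_val v"
    using ce[unfolded ctx_equiv_def, rule_format, of CHole] c0 c1 val_evals[OF v] v by auto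
  then obtain v1 where "evals t1 v1" "is_val v1" by blast
  then have h: "st\<^sup>*\<^sup>* t1 v1" "is_val v1" by (auto simp: evals_def step_eq)
  from steps_sound[OF h(1) c1] have "ctx_equiv t1 v1" "closed v1" by auto
  then show "\<exists>v1. steps t1 v1 \<and> is_val v1 \<and> closed v1 \<and> ctx_equiv t0 v1"
    using h ce_trans[OF c0 c1 \<open>closed v1\<close> ce] by (auto simp: step_eq)
next
  assume v: "stuck t0"
  have "\<exists>v. evals t1 v \<and> stuck v"
    using ce[unfolded ctx_equiv_def, rule_format, of CHole] c0 c1 stuck_evals[OF v] v by auto
  then obtain v1 where "evals t1 v1" "stuck v1" by blast
  then have h: "st\<^sup>*\<^sup>* t1 v1" "stuck v1" by (auto simp: evals_def step_eq)
  from steps_sound[OF h(1) c1] have "ctx_equiv t1 v1" "closed v1" by auto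
  then show "\<exists>v1. steps t1 v1 \<and> stuck v1 \<and> closed v1 \<and> ctx_equiv t0 v1"
    using h ce_trans[OF c0 c1 \<open>closed v1\<close> ce] by (auto simp: step_eq)
qed

lemma lam_clause:
  assumes E: "E \<in> envs" and l: "(Lam b0, Lam b1) \<in> E" and vv: "(v0, v1) \<in> tilde E"
    and val: "is_val v0" "is_val v1"
  shows "(E, subst0 b0 v0, subst0 b1 v1) \<in> trips"
proof -
  have cl: "closed (Lam b0)" "closed (Lam b1)" using E l by (auto simp: envs_def environment_def)
  have cv: "closed v0" "closed v1" using vv by (auto simp: tilde_def)
  have cs: "closed (subst0 b0 v0)" "closed (subst0 b1 v1)"
    using cl cv by (auto simp: closed_def subst0_def intro: closed_subst)
  have ca: "closed (App (Lam b0) v0)" "closed (App (Lam b1) v1)" using cl cv by (auto simp: closed_def)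
  have "tclos E (App (Lam b0) v0) (App (Lam b1) v1)"
    using l vv by (auto simp: tilde_def intro: tclos.intros)
  then have e1: "ctx_equiv (App (Lam b0) v0) (App (Lam b1) v1)"
    using tclos_ce envs_closed_rel[OF E] E by (auto simp: envs_def)
  have e0: "ctx_equiv (App (Lam b0) v0) (subst0 b0 v0)" using red_sound[OF st.sbeta[OF val(1)] ca(1)] .
  have e2: "ctx_equiv (App (Lam b1) v1) (subst0 b1 v1)" using red_sound[OF st.sbeta[OF val(2)] ca(2)] .
  have "ctx_equiv (subst0 b0 v0) (App (Lam b1) v1)"
    using ce_trans[OF cs(1) ca(1) ca(2) ce_sym[OF e0] e1] .
  then have "ctx_equiv (subst0 b0 v0) (subst0 b1 v1)"
    using ce_trans[OF cs(1) ca(2) cs(2) _ e2] by blast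
  then show ?thesis using E cs by (auto simp: trips_def)
qed

lemma shift_clause:
  assumes E: "E \<in> envs" and p: "pure_ctx E0" "pure_ctx E1"
    and mem: "(plug E0 (Shift s0), plug E1 (Shift s1)) \<in> E"
    and p': "pure_ctx E0'" "pure_ctx E1'" and h: "hat E E0' E1'"
  shows "(E, Reset (subst0 s0 (Lam (Reset (plug (lift_ctx 0 E0') (plug (lift_ctx 0 E0) (Var 0)))))),
              Reset (subst0 s1 (Lam (Reset (plug (lift_ctx 0 E1') (plug (lift_ctx 0 E1) (Var 0)))))))
          \<in> trips"
proof -
  let ?a0 = "Reset (plug E0' (plug E0 (Shift s0)))"
  let ?a1 = "Reset (plug E1' (plug E1 (Shift s1)))"
  let ?r0 = "Reset (subst0 s0 (Lam (Reset (plug (lift_ctx 0 E0') (plug (lift_ctx 0 E0) (Var 0))))))"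
  let ?r1 = "Reset (subst0 s1 (Lam (Reset (plug (lift_ctx 0 E1') (plug (lift_ctx 0 E1) (Var 0))))))"
  have cm: "closed (plug E0 (Shift s0))" "closed (plug E1 (Shift s1))"
    using E mem by (auto simp: envs_def environment_def)
  have ca: "closed ?a0" "closed ?a1" using cm hat_closed[OF h] by (auto simp: closed_def)
  have st0: "st ?a0 ?r0"
    using st.sshift[OF pure_ecomp[OF p'(1) p(1)], of s0] by simp
  have st1: "st ?a1 ?r1"
    using st.sshift[OF pure_ecomp[OF p'(2) p(2)], of s1] by simp
  have cr: "closed ?r0" "closed ?r1"
    using st_closed[OF st0] st_closed[OF st1] ca unfolding closed_def by blast+
  have "tclos E ?a0 ?a1" using hat_tclos[OF h tclos.base[OF mem]] by (rule tclos.rst)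
  then have e1: "ctx_equiv ?a0 ?a1"
    using tclos_ce envs_closed_rel[OF E] E by (auto simp: envs_def)
  have e0: "ctx_equiv ?a0 ?r0" using red_sound[OF st0 ca(1)] .
  have e2: "ctx_equiv ?a1 ?r1" using red_sound[OF st1 ca(2)] .
  have "ctx_equiv ?r0 ?a1" using ce_trans[OF cr(1) ca(1) ca(2) ce_sym[OF e0] e1] .
  then have "ctx_equiv ?r0 ?r1" using ce_trans[OF cr(1) ca(2) cr(2) _ e2] by blast
  then show ?thesis using E cr by (auto simp: trips_def)
qed

theorem theorem1:
  assumes "closed t0" and "closed t1" and "ctx_equiv t0 t1"
  shows "env_bisimilar {} t0 t1"
proof -
  have env0: "{} \<in> envs" by (simp add: envs_def environment_def)
  have rel: "env_relation (envs, trips)"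
    by (auto simp: env_relation_def envs_def trips_def)
  have c1: "\<forall>E t0 t1. (E, t0, t1) \<in> snd (envs, trips) \<longrightarrow>
       (\<forall>t0'. step t0 t0' \<longrightarrow> (\<exists>t1'. steps t1 t1' \<and> (E, t0', t1') \<in> snd (envs, trips))) \<and>
       (is_val t0 \<longrightarrow> (\<exists>v1. steps t1 v1 \<and> is_val v1 \<and> insert (t0, v1) E \<in> fst (envs, trips))) \<and>
       (stuck t0 \<longrightarrow> (\<exists>t1'. steps t1 t1' \<and> stuck t1' \<and> insert (t0, t1') E \<in> fst (envs, trips))) \<and>
       (\<forall>t1'. step t1 t1' \<longrightarrow> (\<exists>t0'. steps t0 t0' \<and> (E, t0', t1') \<in> snd (envs, trips))) \<and>
       (is_val t1 \<longrightarrow> (\<exists>v0. steps t0 v0 \<and> is_val v0 \<and> insert (v0, t1) E \<in> fst (envs, trips))) \<and>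
       (stuck t1 \<longrightarrow> (\<exists>t0'. steps t0 t0' \<and> stuck t0' \<and> insert (t0', t1) E \<in> fst (envs, trips)))"
  proof (intro allI impI)
    fix E a b assume "(E, a, b) \<in> snd (envs, trips)"
    then have E: "E \<in> envs" and ca: "closed a" and cb: "closed b" and ce: "ctx_equiv a b"
      by (auto simp: trips_def)
    note L = one_side[OF ca cb ce]
    note R = one_side[OF cb ca ce_sym[OF ce]]
    show "(\<forall>t0'. step a t0' \<longrightarrow> (\<exists>t1'. steps b t1' \<and> (E, t0', t1') \<in> snd (envs, trips))) \<and>
       (is_val a \<longrightarrow> (\<exists>v1. steps b v1 \<and> is_val v1 \<and> insert (a, v1) E \<in> fst (envs, trips))) \<and>
       (stuck a \<longrightarrow> (\<exists>t1'. steps b t1' \<and> stuck t1' \<and> insert (a, t1') E \<in> fst (envs, trips))) \<and>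
       (\<forall>t1'. step b t1' \<longrightarrow> (\<exists>t0'. steps a t0' \<and> (E, t0', t1') \<in> snd (envs, trips))) \<and>
       (is_val b \<longrightarrow> (\<exists>v0. steps a v0 \<and> is_val v0 \<and> insert (v0, b) E \<in> fst (envs, trips))) \<and>
       (stuck b \<longrightarrow> (\<exists>t0'. steps a t0' \<and> stuck t0' \<and> insert (t0', b) E \<in> fst (envs, trips)))"
    proof (intro conjI allI impI)
      fix t0' assume "step a t0'"
      then show "\<exists>t1'. steps b t1' \<and> (E, t0', t1') \<in> snd (envs, trips)"
        using L E cb by (auto simp: trips_def)
    next
      assume "is_val a"
      then obtain v1 where "steps b v1" "is_val v1" "closed v1" "ctx_equiv a v1" using L by blast
      then show "\<exists>v1. steps b v1 \<and> is_val v1 \<and> insert (a, v1) E \<in> fst (envs, trips)"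
        using envs_insert[OF E ca] \<open>is_val a\<close> by auto
    next
      assume "stuck a"
      then obtain v1 where "steps b v1" "stuck v1" "closed v1" "ctx_equiv a v1" using L by blast
      then show "\<exists>v1. steps b v1 \<and> stuck v1 \<and> insert (a, v1) E \<in> fst (envs, trips)"
        using envs_insert[OF E ca] \<open>stuck a\<close> by auto
    next
      fix t1' assume "step b t1'"
      then have "closed t1'" "ctx_equiv t1' a" using R by auto
      then show "\<exists>t0'. steps a t0' \<and> (E, t0', t1') \<in> snd (envs, trips)"
        using E ca ce_sym by (auto simp: trips_def)
    next
      assume "is_val b"
      then obtain v0 where "steps a v0" "is_val v0" "closed v0" "ctx_equiv b v0" using R by blast
      then show "\<exists>v0. steps a v0 \<and> is_val v0 \<and> insert (v0, b) E \<in> fst (envs, trips)"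
        using envs_insert[OF E _ cb] \<open>is_val b\<close> ce_sym by auto
    next
      assume "stuck b"
      then obtain v0 where "steps a v0" "stuck v0" "closed v0" "ctx_equiv b v0" using R by blast
      then show "\<exists>v0. steps a v0 \<and> stuck v0 \<and> insert (v0, b) E \<in> fst (envs, trips)"
        using envs_insert[OF E _ cb] \<open>stuck b\<close> ce_sym by auto
    qed
  qed
  have c2: "\<forall>E \<in> fst (envs, trips).
       (\<forall>b0 b1 v0 v1. (Lam b0, Lam b1) \<in> E \<and> (v0, v1) \<in> tilde E \<and> is_val v0 \<and> is_val v1
          \<longrightarrow> (E, subst0 b0 v0, subst0 b1 v1) \<in> snd (envs, trips)) \<and>
       (\<forall>E0 E1 s0 s1 E0' E1'.
          pure_ctx E0 \<and> pure_ctx E1 \<and> (plug E0 (Shift s0), plug E1 (Shift s1)) \<in> E \<and>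
          pure_ctx E0' \<and> pure_ctx E1' \<and> hat E E0' E1'
          \<longrightarrow> (E, Reset (subst0 s0 (Lam (Reset (plug (lift_ctx 0 E0') (plug (lift_ctx 0 E0) (Var 0)))))),
                  Reset (subst0 s1 (Lam (Reset (plug (lift_ctx 0 E1') (plug (lift_ctx 0 E1) (Var 0)))))))
              \<in> snd (envs, trips))"
    using lam_clause shift_clause by auto
  have "env_bisim (envs, trips)"
    unfolding env_bisim_def using rel c1 c2 by blast
  moreover have "({}, t0, t1) \<in> snd (envs, trips)"
    using assms env0 by (auto simp: trips_def)
  ultimately show ?thesis unfolding env_bisimilar_def by blast
qed


end
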